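(* Let $r \ge 2$ be an integer. For every $a > 0$ there exists a constant $c$ such that for every partition $\Pi \in \mathcal{P}_{n,r}(\frac{1}{2r})$, every edge $e \in \Pi^c$, and every $m \ge c\, n \log n$, \[ |\mathcal{G}_m(\Pi,e) \setminus \mathcal{U}_m(\Pi,e)| \le n^{-a} |\mathcal{G}_m(\Pi,e)|. \]
   Context: All graphs have vertex set $[n]$. $\mathcal{P}_{n,r}$ is the set of partitions of $[n]$ into at most $r$ parts ($r$-colorings); $\mathcal{P}_{n,r}(\gamma)$ is the set of partitions $\{V_1,\dots,V_r\}$ of $[n]$ into $r$ parts with $(\frac1r-\gamma)n\le|V_i|\le(\frac1r+\gamma)n$ for all $i$. A partition $\Pi$ is identified with the complete multipartite graph whose parts are its classes; $e(\Pi)$ is its number of edges and $\Pi^c$ is its complement graph (the union of complete graphs on the classes). $\mathcal{G}_{m-1}(\Pi)$ is the set of subgraphs of $\Pi$ with exactly $m-1$ edges, and for $e \in \Pi^c$, $\mathcal{G}_m(\Pi,e) = \{G+e : G \in \mathcal{G}_{m-1}(\Pi)\}$. $\mathcal{U}_m(\Pi,e)$ is the set of $G \in \mathcal{G}_m(\Pi,e)$ such that $G \notin \mathcal{G}_m(\Pi',f)$ for every $\Pi' \in \mathcal{P}_{n,r}$ with $\Pi' \ne \Pi$ and every $f \in (\Pi')^c$. $\log$ is the natural logarithm. *)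

theory Defs
  imports Complex_Main "HOL-Library.Disjoint_Sets"
begin

text \<open>Vertex set [n] = {1..n}; a graph is a set of edges, an edge is a 2-element set of vertices.\<close>

definition vset :: "nat \<Rightarrow> nat set" where
  "vset n = {1..n}"

definition colorings :: "nat \<Rightarrow> nat \<Rightarrow> nat set set set" where
  "colorings n r = {P. partition_on (vset n) P \<and> card P \<le> r}"

text \<open>P_{n,r}(gamma): partitions of [n] into exactly r classes, each of size
  between (1/r - gamma) n and (1/r + gamma) n.\<close>
definition balanced_colorings :: "nat \<Rightarrow> nat \<Rightarrow> real \<Rightarrow> nat set set set" where
  "balanced_colorings n r \<gamma> = {P. partition_on (vset n) P \<and> card P = r \<and>
     (\<forall>V\<in>P. (1 / real r - \<gamma>) * real n \<le> real (card V) \<and>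
             real (card V) \<le> (1 / real r + \<gamma>) * real n)}"

definition mp_edges :: "nat \<Rightarrow> nat set set \<Rightarrow> nat set set" where
  "mp_edges n P = {{u, v} | u v. u \<in> vset n \<and> v \<in> vset n \<and> u \<noteq> v \<and>
                     \<not> (\<exists>A\<in>P. u \<in> A \<and> v \<in> A)}"

definition mp_compl :: "nat \<Rightarrow> nat set set \<Rightarrow> nat set set" where
  "mp_compl n P = {{u, v} | u v. u \<in> vset n \<and> v \<in> vset n \<and> u \<noteq> v \<and>
                     (\<exists>A\<in>P. u \<in> A \<and> v \<in> A)}"

definition Gsub :: "nat \<Rightarrow> nat set set \<Rightarrow> nat \<Rightarrow> nat set set set" where
  "Gsub n P k = {G. G \<subseteq> mp_edges n P \<and> card G = k}"

definition Gme :: "nat \<Rightarrow> nat set set \<Rightarrow> nat set \<Rightarrow> nat \<Rightarrow> nat set set set" where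
  "Gme n P e m = (\<lambda>G. insert e G) ` Gsub n P (m - 1)"

definition Ume :: "nat \<Rightarrow> nat \<Rightarrow> nat set set \<Rightarrow> nat set \<Rightarrow> nat \<Rightarrow> nat set set set" where
  "Ume n r P e m = {G \<in> Gme n P e m. \<forall>P' \<in> colorings n r. \<forall>f \<in> mp_compl n P'.
                      P' \<noteq> P \<longrightarrow> G \<notin> Gme n P' f m}"

end

theory Submission
  imports Defs "HOL-Library.FuncSet"
begin

lemma finite_vset[simp]: "finite (vset n)" by (simp add: vset_def)
lemma card_vset[simp]: "card (vset n) = n" by (simp add: vset_def)

lemma part_eq:
  assumes "partition_on X P" "A \<in> P" "B \<in> P" "x \<in> A" "x \<in> B" shows "A = B"
proof (rule ccontr)
  assume "A \<noteq> B"
  hence "A \<inter> B = {}" using disjointD[OF partition_onD2[OF assms(1)] assms(2,3)] by simp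
  thus False using assms(4,5) by blast
qed

lemma part_sub: "partition_on X P \<Longrightarrow> A \<in> P \<Longrightarrow> A \<subseteq> X"
  using partition_onD1 by blast

lemma part_ex: "partition_on X P \<Longrightarrow> x \<in> X \<Longrightarrow> \<exists>A\<in>P. x \<in> A"
  using partition_onD1 by blast

lemma edges_compl_disj: "mp_edges n P \<inter> mp_compl n P = {}"
proof (rule ccontr)
  assume "mp_edges n P \<inter> mp_compl n P \<noteq> {}"
  then obtain x where x1: "x \<in> mp_edges n P" and x2: "x \<in> mp_compl n P" by blast
  from x1 obtain u v where uv: "x = {u,v}" "\<not> (\<exists>A\<in>P. u \<in> A \<and> v \<in> A)" unfolding mp_edges_def by blast
  from x2 obtain u' v' A where uv': "x = {u',v'}" "A \<in> P" "u' \<in> A" "v' \<in> A" unfolding mp_compl_def by blast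
  have "u \<in> A" "v \<in> A" using uv(1) uv'(1,3,4) by (auto simp: doubleton_eq_iff)
  thus False using uv(2) uv'(2) by blast
qed

lemma edges_sub: "mp_edges n P \<subseteq> (\<lambda>p. {fst p, snd p}) ` (vset n \<times> vset n)"
proof
  fix x assume "x \<in> mp_edges n P"
  then obtain u v where x: "x = {u,v}" "u \<in> vset n" "v \<in> vset n" unfolding mp_edges_def by blast
  show "x \<in> (\<lambda>p. {fst p, snd p}) ` (vset n \<times> vset n)"
    by (rule image_eqI[where x="(u,v)"]) (use x in auto)
qed

lemma finite_edges[simp]: "finite (mp_edges n P)"
  by (rule finite_subset[OF edges_sub]) simp

lemma card_edges: "card (mp_edges n P) \<le> n^2"
proof -
  have "card (mp_edges n P) \<le> card ((\<lambda>p. {fst p, snd p}) ` (vset n \<times> vset n))"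
    by (rule card_mono[OF _ edges_sub]) simp
  also have "\<dots> \<le> card (vset n \<times> vset n)" by (rule card_image_le) simp
  finally show ?thesis by (simp add: power2_eq_square card_cartesian_product)
qed

definition D1 :: "nat set \<Rightarrow> nat set \<Rightarrow> nat set set" where
  "D1 A B = {{a,b} | a b. a \<in> A \<and> b \<in> B}"
definition D2 :: "nat set \<Rightarrow> (nat \<Rightarrow> nat set) \<Rightarrow> nat set set" where
  "D2 M \<tau> = {{v,w} | v w. v \<in> M \<and> w \<in> \<tau> v - M}"
definition I1 :: "nat \<Rightarrow> nat set set \<Rightarrow> real \<Rightarrow> (nat set \<times> nat set) set" where
  "I1 n P \<epsilon> = {(A,B). A \<subseteq> vset n \<and> B \<subseteq> vset n \<and> (\<exists>V\<in>P. \<exists>V'\<in>P. V \<noteq> V' \<and> A \<subseteq> V \<and> B \<subseteq> V')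
      \<and> \<epsilon> * real n \<le> real (card A) \<and> \<epsilon> * real n \<le> real (card B)}"
definition I2 :: "nat \<Rightarrow> nat set set \<Rightarrow> nat \<Rightarrow> (nat set \<times> (nat \<Rightarrow> nat set)) set" where
  "I2 n P r = {(M,\<tau>). M \<subseteq> vset n \<and> M \<noteq> {} \<and> \<tau> \<in> M \<rightarrow>\<^sub>E P \<and> (\<forall>v\<in>M. v \<notin> \<tau> v)
      \<and> (\<forall>V\<in>P. real (card (V \<inter> M)) \<le> real n / (8 * real r))}"

lemma struct_lemma:
  fixes r n :: nat and G0 :: "nat set set"
  assumes r2: "r \<ge> 2" and n1: "n \<ge> 1"
    and P: "P \<in> balanced_colorings n r (1 / (2 * real r))"
    and P': "P' \<in> colorings n r"
    and finG: "finite G0"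
    and bad: "card (G0 \<inter> mp_compl n P') \<le> 1"
    and Q1: "\<forall>(A,B)\<in>I1 n P (1 / (8 * real r ^ 2)). 2 \<le> card (G0 \<inter> D1 A B)"
    and Q2: "\<forall>(M,\<tau>)\<in>I2 n P r. 2 \<le> card (G0 \<inter> D2 M \<tau>)"
  shows "P' = P"
proof -
  define \<epsilon> :: real where "\<epsilon> = 1 / (8 * real r ^ 2)"
  have pP: "partition_on (vset n) P" and cP: "card P = r"
    and sz: "\<And>V. V \<in> P \<Longrightarrow> (1 / real r - 1 / (2 * real r)) * real n \<le> real (card V)"
    using P unfolding balanced_colorings_def by auto
  have pP': "partition_on (vset n) P'" and cP': "card P' \<le> r"
    using P' unfolding colorings_def by auto
  have finP: "finite P" "finite P'" using finite_elements[OF finite_vset pP] finite_elements[OF finite_vset pP'] by auto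
  have rpos: "real r > 0" using r2 by simp
  have sz2: "real n / (2 * real r) \<le> real (card V)" if "V \<in> P" for V
  proof -
    have "(1 / real r - 1 / (2 * real r)) * real n = real n / (2 * real r)"
      using rpos by (simp add: field_simps)
    thus ?thesis using sz[OF that] by simp
  qed
  have comp_le: "card (G0 \<inter> X) \<le> 1" if "X \<subseteq> mp_compl n P'" for X
  proof -
    have "card (G0 \<inter> X) \<le> card (G0 \<inter> mp_compl n P')"
      by (rule card_mono) (use finG that in auto)
    thus ?thesis using bad by simp
  qed
  define L where "L V W \<longleftrightarrow> \<epsilon> * real n \<le> real (card (V \<inter> W))" for V W :: "nat set"
  have b: False if "V \<in> P" "V' \<in> P" "V \<noteq> V'" "W \<in> P'" "L V W" "L V' W" for V V' W
  proof -
    have ex: "\<exists>V0\<in>P. \<exists>V1\<in>P. V0 \<noteq> V1 \<and> V \<inter> W \<subseteq> V0 \<and> V' \<inter> W \<subseteq> V1"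
      using that by blast
    have "V \<subseteq> vset n" "V' \<subseteq> vset n" using that part_sub[OF pP] by auto
    hence "(V \<inter> W, V' \<inter> W) \<in> I1 n P \<epsilon>"
      unfolding I1_def using ex that(5,6) unfolding L_def by auto
    hence "2 \<le> card (G0 \<inter> D1 (V \<inter> W) (V' \<inter> W))" using Q1 \<epsilon>_def by auto
    moreover have sub1: "D1 (V \<inter> W) (V' \<inter> W) \<subseteq> mp_compl n P'"
    proof
      fix x assume "x \<in> D1 (V \<inter> W) (V' \<inter> W)"
      then obtain a b where x: "x = {a,b}" "a \<in> V \<inter> W" "b \<in> V' \<inter> W" unfolding D1_def by blast
      have "a \<noteq> b" using part_eq[OF pP] that x by blast
      moreover have "a \<in> vset n" "b \<in> vset n" using x part_sub[OF pP] that by auto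
      ultimately show "x \<in> mp_compl n P'" unfolding mp_compl_def using x that by blast
    qed
    moreover have "card (G0 \<inter> D1 (V \<inter> W) (V' \<inter> W)) \<le> 1" by (rule comp_le[OF sub1])
    ultimately show False by simp
  qed
  have a: "\<exists>W\<in>P'. L V W" if V: "V \<in> P" for V
  proof (rule ccontr)
    assume "\<not> ?thesis"
    hence lt: "real (card (V \<inter> W)) < \<epsilon> * real n" if "W \<in> P'" for W using that L_def by auto
    have Vs: "V \<subseteq> vset n" using part_sub[OF pP V] .
    have Us: "\<Union>P' = vset n" using partition_onD1[OF pP'] by simp
    have "V = (\<Union>W\<in>P'. V \<inter> W)" using Vs Us by auto
    hence "card V \<le> (\<Sum>W\<in>P'. card (V \<inter> W))" using card_UN_le[OF finP(2), of "\<lambda>W. V \<inter> W"] by simp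
    hence "real (card V) \<le> real (\<Sum>W\<in>P'. card (V \<inter> W))" by (simp only: of_nat_le_iff)
    hence "real (card V) \<le> (\<Sum>W\<in>P'. real (card (V \<inter> W)))" by simp
    also have "\<dots> \<le> (\<Sum>W\<in>P'. \<epsilon> * real n)" by (rule sum_mono) (use lt in fastforce)
    also have "\<dots> = real (card P') * (\<epsilon> * real n)" by simp
    also have "\<dots> \<le> real r * (\<epsilon> * real n)"
      by (rule mult_right_mono) (use cP' \<epsilon>_def in auto)
    also have "\<dots> = real n / (8 * real r)" using rpos by (simp add: \<epsilon>_def power2_eq_square field_simps)
    also have "\<dots> < real n / (2 * real r)" using rpos n1 by (simp add: field_simps)
    finally show False using sz2[OF V] by simp
  qed
  then obtain \<sigma> where \<sigma>: "\<And>V. V \<in> P \<Longrightarrow> \<sigma> V \<in> P' \<and> L V (\<sigma> V)" by metis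
  have inj: "inj_on \<sigma> P"
  proof (rule inj_onI)
    fix V V' assume "V \<in> P" "V' \<in> P" "\<sigma> V = \<sigma> V'"
    thus "V = V'" using b[of V V' "\<sigma> V"] \<sigma>[of V] \<sigma>[of V'] by auto
  qed
  have im: "\<sigma> ` P = P'"
  proof (rule card_subset_eq)
    show "finite P'" by (rule finP)
    show "\<sigma> ` P \<subseteq> P'" using \<sigma> by auto
    show "card (\<sigma> ` P) = card P'"
    proof -
      have "\<sigma> ` P \<subseteq> P'" using \<sigma> by auto
      hence "card (\<sigma> ` P) \<le> card P'" by (rule card_mono[OF finP(2)])
      thus ?thesis using card_image[OF inj] cP cP' by simp
    qed
  qed
  have d: "\<not> L V W" if dV: "V \<in> P" "W \<in> P'" "W \<noteq> \<sigma> V" for V W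
  proof
    assume LVW: "L V W"
    obtain V' where V': "V' \<in> P" "W = \<sigma> V'" using im dV by blast
    hence "V' \<noteq> V" using dV by auto
    thus False using b[of V V' W] LVW \<sigma> V' dV by auto
  qed
  define M where "M = {v \<in> vset n. \<forall>V\<in>P. v \<in> V \<longrightarrow> v \<notin> \<sigma> V}"
  show ?thesis
  proof (cases "M = {}")
    case True
    have sub: "V \<subseteq> \<sigma> V" if V: "V \<in> P" for V
    proof
      fix v assume v: "v \<in> V"
      hence "v \<in> vset n" using part_sub[OF pP V] by auto
      then obtain V'' where "V'' \<in> P" "v \<in> V''" "v \<in> \<sigma> V''" using True M_def by auto
      moreover have "V'' = V" using part_eq[OF pP] calculation V v by blast
      ultimately show "v \<in> \<sigma> V" by simp
    qed
    have eq: "\<sigma> V = V" if V: "V \<in> P" for V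
    proof
      show "V \<subseteq> \<sigma> V" using sub V .
      show "\<sigma> V \<subseteq> V"
      proof
        fix x assume x: "x \<in> \<sigma> V"
        hence "x \<in> vset n" using part_sub[OF pP'] \<sigma> V by blast
        then obtain V2 where V2: "V2 \<in> P" "x \<in> V2" using part_ex[OF pP] by blast
        hence "x \<in> \<sigma> V2" using sub by blast
        hence "\<sigma> V2 = \<sigma> V" using part_eq[OF pP'] \<sigma> V V2 x by blast
        hence "V2 = V" using inj V V2 by (simp add: inj_on_eq_iff)
        thus "x \<in> V" using V2 by simp
      qed
    qed
    have "\<sigma> ` P = id ` P" by (rule image_cong) (use eq in auto)
    thus ?thesis using im by simp
  next
    case False
    define Wof where "Wof v = (SOME W. W \<in> P' \<and> v \<in> W)" for v
    have Wof: "Wof v \<in> P' \<and> v \<in> Wof v" if "v \<in> vset n" for v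
      unfolding Wof_def by (rule someI_ex) (use part_ex[OF pP' that] in blast)
    define \<tau> where "\<tau> = restrict (\<lambda>v. inv_into P \<sigma> (Wof v)) M"
    have Mv: "M \<subseteq> vset n" using M_def by auto
    have \<tau>P: "\<tau> v \<in> P" and \<tau>\<sigma>: "\<sigma> (\<tau> v) = Wof v" if "v \<in> M" for v
    proof -
      have "Wof v \<in> \<sigma> ` P" using Wof Mv that im by auto
      then obtain V where V: "V \<in> P" "Wof v = \<sigma> V" by blast
      have "\<tau> v = V" using that V inv_into_f_f[OF inj V(1)] by (simp add: \<tau>_def)
      thus "\<tau> v \<in> P" "\<sigma> (\<tau> v) = Wof v" using V by auto
    qed
    have nin: "v \<notin> \<tau> v" if v: "v \<in> M" for v
    proof
      assume "v \<in> \<tau> v"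
      hence "v \<notin> \<sigma> (\<tau> v)" using v M_def \<tau>P[OF v] by auto
      thus False using \<tau>\<sigma>[OF v] Wof Mv v by auto
    qed
    have cardM: "real (card (V \<inter> M)) \<le> real n / (8 * real r)" if V: "V \<in> P" for V
    proof -
      have sub3: "V \<inter> M \<subseteq> (\<Union>W\<in>P' - {\<sigma> V}. V \<inter> W)"
      proof
        fix x assume x: "x \<in> V \<inter> M"
        then obtain W where "W \<in> P'" "x \<in> W" using Wof Mv by blast
        moreover have "x \<notin> \<sigma> V" using x V M_def by auto
        ultimately show "x \<in> (\<Union>W\<in>P' - {\<sigma> V}. V \<inter> W)" using x by auto
      qed
      have "card (V \<inter> M) \<le> card (\<Union>W\<in>P' - {\<sigma> V}. V \<inter> W)"
      proof (rule card_mono[OF _ sub3])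
        have fV: "finite V" by (rule finite_subset[OF part_sub[OF pP V] finite_vset])
        have "(\<Union>W\<in>P' - {\<sigma> V}. V \<inter> W) \<subseteq> V" by blast
        thus "finite (\<Union>W\<in>P' - {\<sigma> V}. V \<inter> W)" using fV by (rule finite_subset)
      qed
      also have "\<dots> \<le> (\<Sum>W\<in>P' - {\<sigma> V}. card (V \<inter> W))" by (rule card_UN_le) (use finP in auto)
      finally have "real (card (V \<inter> M)) \<le> real (\<Sum>W\<in>P' - {\<sigma> V}. card (V \<inter> W))"
        by (simp only: of_nat_le_iff)
      hence "real (card (V \<inter> M)) \<le> (\<Sum>W\<in>P' - {\<sigma> V}. real (card (V \<inter> W)))" by simp
      also have "\<dots> \<le> (\<Sum>W\<in>P' - {\<sigma> V}. \<epsilon> * real n)"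
        by (rule sum_mono) (use d V L_def in fastforce)
      also have "\<dots> = real (card (P' - {\<sigma> V})) * (\<epsilon> * real n)" by simp
      also have "\<dots> \<le> real r * (\<epsilon> * real n)"
      proof (rule mult_right_mono)
        have "card (P' - {\<sigma> V}) \<le> card P'" by (rule card_mono) (use finP in auto)
        thus "real (card (P' - {\<sigma> V})) \<le> real r" using cP' by simp
      qed (use \<epsilon>_def in auto)
      also have "\<dots> = real n / (8 * real r)" using rpos by (simp add: \<epsilon>_def power2_eq_square field_simps)
      finally show ?thesis .
    qed
    have "(M, \<tau>) \<in> I2 n P r"
      unfolding I2_def using False Mv \<tau>P nin cardM by (auto simp: \<tau>_def)
    hence "2 \<le> card (G0 \<inter> D2 M \<tau>)" using Q2 by auto
    moreover have sub2: "D2 M \<tau> \<subseteq> mp_compl n P'"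
    proof
      fix x assume "x \<in> D2 M \<tau>"
      then obtain v w where x: "x = {v,w}" "v \<in> M" "w \<in> \<tau> v" "w \<notin> M" unfolding D2_def by blast
      have wv: "w \<in> vset n" using x part_sub[OF pP \<tau>P[OF x(2)]] by auto
      then obtain V where V: "V \<in> P" "w \<in> V" "w \<in> \<sigma> V" using x M_def by auto
      have "V = \<tau> v" using part_eq[OF pP V(1) \<tau>P[OF x(2)]] V x by blast
      hence "w \<in> Wof v" using V \<tau>\<sigma>[OF x(2)] by simp
      moreover have "v \<in> Wof v" "Wof v \<in> P'" using Wof Mv x by auto
      moreover have "v \<noteq> w" using nin x by auto
      ultimately show "x \<in> mp_compl n P'" unfolding mp_compl_def using x wv Mv by blast
    qed
    moreover have "card (G0 \<inter> D2 M \<tau>) \<le> 1" by (rule comp_le[OF sub2])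
    ultimately show ?thesis by simp
  qed
qed

lemma binom_step_real:
  fixes M k N :: nat
  assumes "1 \<le> M" "M \<le> N" "k \<le> N"
  shows "real ((M - 1) choose k) \<le> (1 - real k / real N) * real (M choose k)"
proof -
  have eq: "real (M - k) * real (M choose k) = real M * real ((M - 1) choose k)"
    using binomial_absorb_comp[of M k] by (metis of_nat_mult)
  have Mpos: "real M > 0" using assms by simp
  have Npos: "real N > 0" using assms by simp
  have "real ((M - 1) choose k) = real (M - k) / real M * real (M choose k)"
    using eq Mpos by (simp add: field_simps)
  also have "\<dots> \<le> (1 - real k / real N) * real (M choose k)"
  proof (rule mult_right_mono)
    show "real (M - k) / real M \<le> 1 - real k / real N"
    proof (cases "k \<le> M")
      case True
      hence "real (M - k) / real M = 1 - real k / real M" using Mpos by (simp add: field_simps)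
      moreover have "real k / real M \<ge> real k / real N"
        using assms Mpos by (intro divide_left_mono) auto
      ultimately show ?thesis by simp
    next
      case False
      hence "M - k = 0" by simp
      moreover have "real k / real N \<le> 1" using assms Npos by simp
      ultimately show ?thesis by simp
    qed
  qed simp
  finally show ?thesis .
qed

lemma binom_pow:
  fixes N k j :: nat
  assumes "j \<le> N" "k \<le> N"
  shows "real ((N - j) choose k) \<le> (1 - real k / real N) ^ j * real (N choose k)"
  using assms(1)
proof (induction j)
  case 0 thus ?case by simp
next
  case (Suc j)
  have h0: "0 \<le> 1 - real k / real N"
    using assms Suc.prems by (simp add: divide_le_eq_1)
  have "real ((N - Suc j) choose k) = real ((N - j - 1) choose k)" by simp
  also have "\<dots> \<le> (1 - real k / real N) * real ((N - j) choose k)"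
    by (rule binom_step_real) (use Suc.prems assms in auto)
  also have "\<dots> \<le> (1 - real k / real N) * ((1 - real k / real N) ^ j * real (N choose k))"
    by (rule mult_left_mono) (use Suc h0 in auto)
  finally show ?case by simp
qed

lemma binom_exp:
  fixes N k j :: nat
  assumes "j \<le> N" "k \<le> N"
  shows "real ((N - j) choose k) \<le> exp (- (real k * real j / real N)) * real (N choose k)"
proof -
  have h0: "0 \<le> 1 - real k / real N"
  proof (cases "N = 0")
    case False thus ?thesis using assms by (simp add: divide_le_eq_1)
  qed simp
  have "(1 - real k / real N) ^ j \<le> exp (- (real k / real N)) ^ j"
    by (rule power_mono) (use h0 exp_ge_add_one_self[of "- (real k / real N)"] in auto)
  also have "\<dots> = exp (- (real k * real j / real N))"
    by (simp add: exp_of_nat_mult[symmetric] field_simps)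
  finally have "(1 - real k / real N) ^ j \<le> exp (- (real k * real j / real N))" .
  hence "(1 - real k / real N) ^ j * real (N choose k) \<le> exp (- (real k * real j / real N)) * real (N choose k)"
    by (rule mult_right_mono) simp
  thus ?thesis using binom_pow[OF assms] by linarith
qed

lemma card_avoid:
  assumes "finite E" "X \<subseteq> E"
  shows "card {G. G \<subseteq> E \<and> card G = k \<and> G \<inter> X = {}} = (card E - card X) choose k"
proof -
  have "{G. G \<subseteq> E \<and> card G = k \<and> G \<inter> X = {}} = {G. G \<subseteq> E - X \<and> card G = k}" by blast
  moreover have "card (E - X) = card E - card X" using assms by (simp add: card_Diff_subset finite_subset)
  ultimately show ?thesis using n_subsets[of "E - X" k] assms by simp
qed

lemma sum_pow_card:
  fixes z :: real
  assumes "finite S"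
  shows "(\<Sum>M\<in>Pow S. z ^ card M) = (1 + z) ^ card S"
  using assms
proof (induction S rule: finite_induct)
  case empty thus ?case by simp
next
  case (insert a S)
  have inj: "inj_on (insert a) (Pow S)"
    by (rule inj_onI) (use insert.hyps in \<open>auto simp: insert_ident\<close>)
  have disj: "Pow S \<inter> insert a ` Pow S = {}" using insert.hyps by auto
  have "(\<Sum>M\<in>Pow (insert a S). z ^ card M) = (\<Sum>M\<in>Pow S. z ^ card M) + (\<Sum>M\<in>insert a ` Pow S. z ^ card M)"
    unfolding Pow_insert by (rule sum.union_disjoint) (use insert.hyps disj in auto)
  also have "(\<Sum>M\<in>insert a ` Pow S. z ^ card M) = (\<Sum>M\<in>Pow S. z ^ card (insert a M))"
    by (rule sum.reindex[OF inj, unfolded comp_def])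
  also have "\<dots> = (\<Sum>M\<in>Pow S. z * z ^ card M)"
  proof (rule sum.cong)
    fix M assume "M \<in> Pow S"
    hence "finite M" "a \<notin> M" using insert.hyps finite_subset by auto
    thus "z ^ card (insert a M) = z * z ^ card M" by simp
  qed simp
  also have "\<dots> = z * (1 + z) ^ card S" by (simp only: sum_distrib_left[symmetric] insert.IH)
  finally show ?case using insert.IH insert.hyps by (simp add: algebra_simps)
qed

lemma ln2_ge: "ln (2::real) \<ge> 1/2"
proof -
  have "exp (1/2::real) ^ 2 = exp (1/2 + 1/2)" by (simp only: power2_eq_square exp_add)
  hence "exp (1/2::real) ^ 2 = exp 1" by simp
  also have "\<dots> \<le> 3" by (rule exp_le)
  finally have "exp (1/2::real) ^ 2 \<le> 2 ^ 2" by simp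
  hence "exp (1/2::real) \<le> 2" by (rule power2_le_imp_le) simp
  hence "ln (exp (1/2::real)) \<le> ln 2" by (subst ln_le_cancel_iff) auto
  thus ?thesis by simp
qed

lemma pair_img: "{{v,w} | v w. (v,w) \<in> S} = (\<lambda>p. {fst p, snd p}) ` S"
proof
  show "{{v,w} | v w. (v,w) \<in> S} \<subseteq> (\<lambda>p. {fst p, snd p}) ` S"
  proof
    fix x assume "x \<in> {{v,w} | v w. (v,w) \<in> S}"
    then obtain v w where "x = {v,w}" "(v,w) \<in> S" by blast
    thus "x \<in> (\<lambda>p. {fst p, snd p}) ` S" by (intro image_eqI[where x="(v,w)"]) auto
  qed
  show "(\<lambda>p. {fst p, snd p}) ` S \<subseteq> {{v,w} | v w. (v,w) \<in> S}"
  proof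
    fix x assume "x \<in> (\<lambda>p. {fst p, snd p}) ` S"
    then obtain p where "p \<in> S" "x = {fst p, snd p}" by blast
    thus "x \<in> {{v,w} | v w. (v,w) \<in> S}" unfolding mem_Collect_eq
      by (intro exI[of _ "fst p"] exI[of _ "snd p"]) simp
  qed
qed

lemma card_D1:
  assumes "A \<inter> B = {}"
  shows "card (D1 A B) = card A * card B"
proof -
  have "D1 A B = {{v,w} | v w. (v,w) \<in> A \<times> B}" by (simp only: D1_def mem_Sigma_iff)
  hence "D1 A B = (\<lambda>p. {fst p, snd p}) ` (A \<times> B)" by (simp only: pair_img)
  moreover have "inj_on (\<lambda>p. {fst p, snd p}) (A \<times> B)"
  proof (rule inj_onI)
    fix p q assume "p \<in> A \<times> B" "q \<in> A \<times> B" "{fst p, snd p} = {fst q, snd q}"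
    hence h: "fst p = fst q \<and> snd p = snd q \<or> fst p = snd q \<and> snd p = fst q" by (simp only: doubleton_eq_iff)
    have "fst p \<in> A" "snd q \<in> B" using \<open>p \<in> A \<times> B\<close> \<open>q \<in> A \<times> B\<close> by auto
    hence "fst p \<in> A" "snd q \<in> B" .
    have "fst p \<noteq> snd q"
    proof
      assume "fst p = snd q"
      hence "fst p \<in> A \<inter> B" using \<open>fst p \<in> A\<close> \<open>snd q \<in> B\<close> by simp
      thus False using assms by simp
    qed
    thus "p = q" using h by (simp add: prod_eq_iff)
  qed
  ultimately show ?thesis by (simp add: card_image card_cartesian_product)
qed

lemma card_D2:
  assumes "finite M" "\<And>v. v \<in> M \<Longrightarrow> finite (\<tau> v)"
  shows "card (D2 M \<tau>) = (\<Sum>v\<in>M. card (\<tau> v - M))"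
proof -
  have "D2 M \<tau> = {{v,w} | v w. (v,w) \<in> (SIGMA v:M. \<tau> v - M)}" by (simp only: D2_def mem_Sigma_iff)
  hence "D2 M \<tau> = (\<lambda>p. {fst p, snd p}) ` (SIGMA v:M. \<tau> v - M)" by (simp only: pair_img)
  moreover have "inj_on (\<lambda>p. {fst p, snd p}) (SIGMA v:M. \<tau> v - M)"
  proof (rule inj_onI)
    fix p q assume pS: "p \<in> (SIGMA v:M. \<tau> v - M)" and qS: "q \<in> (SIGMA v:M. \<tau> v - M)" and "{fst p, snd p} = {fst q, snd q}"
    hence h: "fst p = fst q \<and> snd p = snd q \<or> fst p = snd q \<and> snd p = fst q" by (simp only: doubleton_eq_iff)
    have "fst p \<in> M" "snd q \<notin> M" using pS qS by auto
    hence "fst p \<noteq> snd q" by metis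
    thus "p = q" using h by (simp add: prod_eq_iff)
  qed
  ultimately have "card (D2 M \<tau>) = card (SIGMA v:M. \<tau> v - M)" by (simp add: card_image)
  also have "\<dots> = (\<Sum>v\<in>M. card (\<tau> v - M))" using assms by (simp add: card_SigmaI)
  finally show ?thesis .
qed

lemma D1_sub:
  assumes "partition_on (vset n) P" "(A,B) \<in> I1 n P \<epsilon>"
  shows "D1 A B \<subseteq> mp_edges n P" and "A \<inter> B = {}"
proof -
  obtain V V' where V: "V \<in> P" "V' \<in> P" "V \<noteq> V'" "A \<subseteq> V" "B \<subseteq> V'" and AB: "A \<subseteq> vset n" "B \<subseteq> vset n"
    using assms(2) unfolding I1_def by blast
  show "A \<inter> B = {}" using part_eq[OF assms(1)] V by blast
  show "D1 A B \<subseteq> mp_edges n P"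
  proof
    fix x assume "x \<in> D1 A B"
    then obtain u v where x: "x = {u,v}" "u \<in> A" "v \<in> B" unfolding D1_def by blast
    have "u \<noteq> v" using part_eq[OF assms(1)] V x by blast
    moreover have "\<not> (\<exists>C\<in>P. u \<in> C \<and> v \<in> C)"
    proof
      assume "\<exists>C\<in>P. u \<in> C \<and> v \<in> C"
      then obtain C where "C \<in> P" "u \<in> C" "v \<in> C" by blast
      hence "C = V" "C = V'" using part_eq[OF assms(1)] V x by blast+
      thus False using V by simp
    qed
    ultimately show "x \<in> mp_edges n P" unfolding mp_edges_def using x AB by blast
  qed
qed

lemma D2_sub:
  assumes "partition_on (vset n) P" "(M,\<tau>) \<in> I2 n P r"
  shows "D2 M \<tau> \<subseteq> mp_edges n P"
proof
  fix x assume "x \<in> D2 M \<tau>"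
  then obtain v w where x: "x = {v,w}" "v \<in> M" "w \<in> \<tau> v" "w \<notin> M" unfolding D2_def by blast
  have I: "M \<subseteq> vset n" "\<tau> v \<in> P" "v \<notin> \<tau> v" using assms(2) x(2) unfolding I2_def by auto
  have wv: "w \<in> vset n" using part_sub[OF assms(1) I(2)] x by auto
  have "v \<noteq> w" using I x by auto
  moreover have "\<not> (\<exists>C\<in>P. v \<in> C \<and> w \<in> C)"
  proof
    assume "\<exists>C\<in>P. v \<in> C \<and> w \<in> C"
    then obtain C where "C \<in> P" "v \<in> C" "w \<in> C" by blast
    hence "C = \<tau> v" using part_eq[OF assms(1) _ I(2)] x by blast
    thus False using I \<open>v \<in> C\<close> by simp
  qed
  ultimately show "x \<in> mp_edges n P" unfolding mp_edges_def using x wv I by blast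
qed

lemma avoid_pick:
  assumes "finite G" "D \<noteq> {}" "card (G \<inter> D) < 2"
  shows "\<exists>x\<in>D. G \<inter> (D - {x}) = {}"
proof (cases "G \<inter> D = {}")
  case True thus ?thesis using assms(2) by blast
next
  case False
  have "card (G \<inter> D) \<noteq> 0" using False assms(1) by simp
  hence "card (G \<inter> D) = 1" using assms(3) by linarith
  then obtain y where "G \<inter> D = {y}" by (rule card_1_singletonE)
  thus ?thesis by blast
qed

lemma union_bound:
  fixes E :: "'a set" and D :: "'i \<Rightarrow> 'a set"
  assumes "finite I" "finite E" "\<And>i. i \<in> I \<Longrightarrow> D i \<subseteq> E \<and> D i \<noteq> {}" "k \<le> card E"
  shows "real (card (\<Union>i\<in>I. \<Union>x\<in>D i. {G. G \<subseteq> E \<and> card G = k \<and> G \<inter> (D i - {x}) = {}}))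
    \<le> (\<Sum>i\<in>I. real (card (D i)) * exp (- (real k * (real (card (D i)) - 1) / real (card E)))) * real (card E choose k)"
proof -
  define N where "N = card E"
  define S where "S i x = {G. G \<subseteq> E \<and> card G = k \<and> G \<inter> (D i - {x}) = {}}" for i x
  have fD: "finite (D i)" if "i \<in> I" for i using assms(3)[OF that] assms(2) finite_subset by blast
  have dpos: "card (D i) \<ge> 1" if "i \<in> I" for i using fD[OF that] assms(3)[OF that] by (simp add: Suc_le_eq card_gt_0_iff)
  have dN: "card (D i) \<le> N" if "i \<in> I" for i using assms(3)[OF that] N_def card_mono[OF assms(2)] by blast
  have cS: "card (S i x) = (N - (card (D i) - 1)) choose k" if "i \<in> I" "x \<in> D i" for i x
  proof -
    have "card (D i - {x}) = card (D i) - 1" using that fD by simp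
    thus ?thesis unfolding S_def N_def using card_avoid[OF assms(2), of "D i - {x}" k] assms(3)[OF that(1)] by auto
  qed
  have "card (\<Union>i\<in>I. \<Union>x\<in>D i. S i x) \<le> (\<Sum>i\<in>I. card (\<Union>x\<in>D i. S i x))"
    by (rule card_UN_le[OF assms(1)])
  also have "\<dots> \<le> (\<Sum>i\<in>I. \<Sum>x\<in>D i. card (S i x))"
  proof (rule sum_mono)
    fix i assume "i \<in> I"
    thus "card (\<Union>x\<in>D i. S i x) \<le> (\<Sum>x\<in>D i. card (S i x))" by (intro card_UN_le fD)
  qed
  also have "\<dots> = (\<Sum>i\<in>I. card (D i) * ((N - (card (D i) - 1)) choose k))"
    by (rule sum.cong) (simp_all add: cS)
  finally have "real (card (\<Union>i\<in>I. \<Union>x\<in>D i. S i x)) \<le> real (\<Sum>i\<in>I. card (D i) * ((N - (card (D i) - 1)) choose k))"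
    by (simp only: of_nat_le_iff)
  also have "\<dots> = (\<Sum>i\<in>I. real (card (D i)) * real ((N - (card (D i) - 1)) choose k))" by simp
  also have "\<dots> \<le> (\<Sum>i\<in>I. real (card (D i)) * (exp (- (real k * real (card (D i) - 1) / real N)) * real (N choose k)))"
  proof (rule sum_mono, rule mult_left_mono)
    fix i assume i: "i \<in> I"
    show "real ((N - (card (D i) - 1)) choose k) \<le> exp (- (real k * real (card (D i) - 1) / real N)) * real (N choose k)"
      by (rule binom_exp) (use dN[OF i] assms(4) N_def in auto)
  qed simp
  also have "\<dots> = (\<Sum>i\<in>I. real (card (D i)) * exp (- (real k * (real (card (D i)) - 1) / real N)) * real (N choose k))"
  proof (rule sum.cong[OF refl])
    fix i assume i: "i \<in> I"
    have "real (card (D i) - 1) = real (card (D i)) - 1" using dpos[OF i] by (simp add: of_nat_diff)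
    thus "real (card (D i)) * (exp (- (real k * real (card (D i) - 1) / real N)) * real (N choose k))
      = real (card (D i)) * exp (- (real k * (real (card (D i)) - 1) / real N)) * real (N choose k)"
      by (simp only: mult.assoc)
  qed
  also have "\<dots> = (\<Sum>i\<in>I. real (card (D i)) * exp (- (real k * (real (card (D i)) - 1) / real N))) * real (N choose k)"
    by (simp only: sum_distrib_right)
  finally show ?thesis unfolding S_def N_def .
qed

lemma term_bound:
  fixes d n :: nat and lam :: real
  assumes "1 \<le> d" "d \<le> n^2" "0 < lam" "lam \<le> 1"
  shows "real d * exp (- (lam * (real d - 1))) \<le> real n ^ 2 * exp 1 * exp (- (lam * real d))"
proof -
  have "exp (- (lam * (real d - 1))) = exp (- (lam * real d)) * exp lam"
    by (simp add: exp_add[symmetric] algebra_simps)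
  also have "\<dots> \<le> exp (- (lam * real d)) * exp 1" using assms by simp
  finally have h: "exp (- (lam * (real d - 1))) \<le> exp (- (lam * real d)) * exp 1" .
  have "real d \<le> real n ^ 2" using assms(2) by (metis of_nat_le_iff of_nat_power)
  hence "real d * exp (- (lam * (real d - 1))) \<le> real n ^ 2 * (exp (- (lam * real d)) * exp 1)"
    using h by (intro mult_mono) auto
  thus ?thesis by (simp add: algebra_simps)
qed

lemma T1_bound:
  fixes n :: nat and a :: real
  assumes "a > 0" "real n \<ge> a + 16"
  shows "4 ^ n * (real n ^ 2 * exp 1 * exp 1) * exp (- (2 * real n * ln (real n))) \<le> real n powr (- a) / 2"
proof -
  have n16: "real n \<ge> 16" using assms by simp
  hence npos: "real n > 0" by simp
  have e: "exp 1 * exp 1 \<le> (9::real)" using mult_mono[OF exp_le exp_le] by simp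
  have p1: "exp (- (2 * real n * ln (real n))) = real n powr (- (2 * real n))"
  proof -
    have h: "real n powr (- (2 * real n)) = exp (- (2 * real n) * ln (real n))" unfolding powr_def using npos by simp
    have eq1: "- (2 * real n * ln (real n)) = - (2 * real n) * ln (real n)" by simp
    show ?thesis unfolding eq1 h by (rule refl)
  qed
  have p2: "(4::real) ^ n \<le> real n powr real n"
  proof -
    have "(4::real) ^ n \<le> real n ^ n" by (rule power_mono) (use n16 in auto)
    thus ?thesis using npos by (simp add: powr_realpow)
  qed
  have p3: "real n ^ 2 = real n powr 2" using npos by (simp add: powr_realpow)
  have ex1: "real n + 2 + - (2 * real n) = 2 - real n" by simp
  have ex2: "2 + (2 - real n) = 4 - real n" by simp
  have "4 ^ n * (real n ^ 2 * exp 1 * exp 1) * exp (- (2 * real n * ln (real n)))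
      = 4 ^ n * (real n ^ 2 * (exp 1 * exp 1)) * real n powr (- (2 * real n))" unfolding p1 by (simp only: mult.assoc)
  also have "\<dots> \<le> real n powr real n * (real n powr 2 * 9) * real n powr (- (2 * real n))"
  proof -
    have "real n ^ 2 * (exp 1 * exp 1) \<le> real n ^ 2 * 9" by (rule mult_left_mono[OF e]) simp
    hence X: "real n ^ 2 * (exp 1 * exp 1) \<le> real n powr 2 * 9" by (simp only: p3)
    have "4 ^ n * (real n ^ 2 * (exp 1 * exp 1)) \<le> real n powr real n * (real n powr 2 * 9)"
      by (rule mult_mono[OF p2 X]) simp_all
    thus ?thesis by (rule mult_right_mono) simp
  qed
  also have "\<dots> = 9 * (real n powr real n * real n powr 2 * real n powr (- (2 * real n)))"
    by (simp only: mult_ac)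
  also have "\<dots> = 9 * real n powr (real n + 2 + - (2 * real n))"
    by (simp only: powr_add)
  also have "\<dots> = 9 * real n powr (2 - real n)" by (simp only: ex1)
  also have "\<dots> \<le> (real n powr 2 / 2) * real n powr (2 - real n)"
  proof (rule mult_right_mono)
    have "real n ^ 2 \<ge> 16 ^ 2" using n16 by (intro power_mono) auto
    hence "9 \<le> real n ^ 2 / 2" by simp
    thus "9 \<le> real n powr 2 / 2" by (simp only: p3)
  qed simp
  also have "\<dots> = real n powr 2 * real n powr (2 - real n) / 2" by simp
  also have "\<dots> = real n powr (2 + (2 - real n)) / 2" by (simp only: powr_add)
  also have "\<dots> = real n powr (4 - real n) / 2" by (simp only: ex2)
  also have "\<dots> \<le> real n powr (- a) / 2"
  proof (rule divide_right_mono)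
    show "real n powr (4 - real n) \<le> real n powr (- a)" by (rule powr_mono) (use assms n16 in auto)
  qed simp
  finally show ?thesis .
qed

lemma T2_bound:
  fixes n r :: nat and a z :: real
  assumes "a > 0" "r \<ge> 1" "real n \<ge> a + 40 * real r + 16" "0 \<le> z"
    "z \<le> exp 1 * real r * real n powr (- (a + 4))"
  shows "real n ^ 2 * exp 1 * ((1 + z) ^ n - 1) \<le> real n powr (- a) / 2"
proof -
  have n16: "real n \<ge> 16" using assms by simp
  hence npos: "real n > 0" by simp
  have rpos: "real r \<ge> 1" using assms by simp
  have ex3: "2 + (- (a + 3)) = - a + (- 1)" by simp
  have pw: "real n * real n powr (- (a + 4)) = real n powr (- (a + 3))"
  proof -
    have eq2: "- (a + 3) = 1 + (- (a + 4))" by simp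
    have "real n powr (- (a + 3)) = real n powr (1 + (- (a + 4)))" by (simp only: eq2)
    also have "\<dots> = real n powr 1 * real n powr (- (a + 4))" by (rule powr_add)
    also have "\<dots> = real n * real n powr (- (a + 4))" using npos by simp
    finally show ?thesis by simp
  qed
  have nz: "real n * z \<le> 3 * real r * real n powr (- (a + 3))"
  proof -
    have "real n * z \<le> real n * (exp 1 * real r * real n powr (- (a + 4)))"
      using assms npos by (intro mult_left_mono) auto
    also have "\<dots> \<le> real n * (3 * real r * real n powr (- (a + 4)))"
      using npos exp_le by (intro mult_left_mono mult_right_mono) auto
    also have "\<dots> = 3 * real r * (real n * real n powr (- (a + 4)))" by simp
    finally show ?thesis using pw by simp
  qed
  have q: "real n powr (- (a + 3)) \<le> real n powr (- 1)"
    using assms n16 by (intro powr_mono) auto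
  have nz2: "real n * z \<le> 1/2"
  proof -
    have "3 * real r * real n powr (- (a + 3)) \<le> 3 * real r * real n powr (- 1)"
      using q rpos by (intro mult_left_mono) auto
    also have "\<dots> = 3 * real r / real n" using npos by (simp add: powr_minus divide_inverse)
    also have "\<dots> \<le> 1/2" using assms npos by (simp add: field_simps)
    finally show ?thesis using nz by simp
  qed
  have "(1 + z) ^ n \<le> exp z ^ n"
    by (rule power_mono) (use assms exp_ge_add_one_self[of z] in auto)
  also have "\<dots> = exp (real n * z)" by (simp add: exp_of_nat_mult)
  also have "\<dots> \<le> 1 + 2 * (real n * z)"
    by (rule real_exp_bound_lemma) (use assms nz2 in auto)
  finally have h1: "(1 + z) ^ n - 1 \<le> 2 * (real n * z)" by simp
  have "real n ^ 2 * exp 1 * ((1 + z) ^ n - 1) \<le> real n ^ 2 * exp 1 * (2 * (real n * z))"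
    using h1 by (intro mult_left_mono) auto
  also have "\<dots> \<le> real n ^ 2 * 3 * (2 * (3 * real r * real n powr (- (a + 3))))"
  proof -
    have nzp: "0 \<le> real n * z" using npos assms by simp
    have "exp 1 * (2 * (real n * z)) \<le> 3 * (2 * (3 * real r * real n powr (- (a + 3))))"
    proof -
      have nz2: "2 * (real n * z) \<le> 2 * (3 * real r * real n powr (- (a + 3)))" by (rule mult_left_mono[OF nz]) simp
      show ?thesis by (rule mult_mono[OF exp_le nz2]) (use nzp in auto)
    qed
    hence "real n ^ 2 * (exp 1 * (2 * (real n * z))) \<le> real n ^ 2 * (3 * (2 * (3 * real r * real n powr (- (a + 3)))))"
      by (rule mult_left_mono) simp
    thus ?thesis by (simp only: mult.assoc)
  qed
  also have "\<dots> = 18 * real r * (real n powr 2 * real n powr (- (a + 3)))"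
    using npos by (simp add: powr_realpow algebra_simps)
  also have "\<dots> = 18 * real r * real n powr (2 + (- (a + 3)))"
    by (simp only: powr_add)
  also have "\<dots> = 18 * real r * real n powr (- a + (- 1))"
    by (simp only: ex3)
  also have "\<dots> = 18 * real r * (real n powr (- a) * real n powr (- 1))"
    by (simp only: powr_add)
  also have "\<dots> = 18 * real r / real n * real n powr (- a)"
    using npos by (simp add: powr_minus divide_inverse)
  also have "\<dots> \<le> (1/2) * real n powr (- a)"
    using assms npos by (intro mult_right_mono) (auto simp: field_simps)
  finally show ?thesis by simp
qed

lemma gme_card:
  assumes "e \<in> mp_compl n P"
  shows "card (Gme n P e m) = card (mp_edges n P) choose (m - 1)"
proof -
  have eE: "e \<notin> mp_edges n P" using assms edges_compl_disj by blast
  have inj: "inj_on (insert e) (Gsub n P (m - 1))"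
  proof (rule inj_onI)
    fix G G' assume G: "G \<in> Gsub n P (m - 1)" "G' \<in> Gsub n P (m - 1)" "insert e G = insert e G'"
    have "e \<notin> G" "e \<notin> G'" using G(1,2) eE unfolding Gsub_def by auto
    hence "G = insert e G - {e}" "G' = insert e G' - {e}" by auto
    thus "G = G'" using G(3) by simp
  qed
  have "card (Gme n P e m) = card (Gsub n P (m - 1))" unfolding Gme_def by (rule card_image[OF inj])
  also have "\<dots> = card (mp_edges n P) choose (m - 1)" unfolding Gsub_def by (rule n_subsets) simp
  finally show ?thesis .
qed

lemma bad_sub:
  "Gme n P e m - Ume n r P e m \<subseteq>
     insert e ` {G0 \<in> Gsub n P (m - 1). \<exists>P'\<in>colorings n r. P' \<noteq> P \<and> card (G0 \<inter> mp_compl n P') \<le> 1}"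
proof
  fix G assume G: "G \<in> Gme n P e m - Ume n r P e m"
  then obtain G0 where G0: "G0 \<in> Gsub n P (m - 1)" "G = insert e G0" unfolding Gme_def by blast
  from G obtain P' f where P': "P' \<in> colorings n r" "f \<in> mp_compl n P'" "P' \<noteq> P" "G \<in> Gme n P' f m"
    unfolding Ume_def by blast
  then obtain G' where G': "G' \<in> Gsub n P' (m - 1)" "G = insert f G'" unfolding Gme_def by blast
  have "G0 \<inter> mp_compl n P' \<subseteq> {f}"
  proof
    fix x assume x: "x \<in> G0 \<inter> mp_compl n P'"
    hence "x \<in> insert f G'" using G0 G' by auto
    moreover have "x \<notin> G'" using x G' edges_compl_disj[of n P'] unfolding Gsub_def by blast
    ultimately show "x \<in> {f}" by simp
  qed
  hence "card (G0 \<inter> mp_compl n P') \<le> card {f}" by (rule card_mono[rotated]) simp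
  hence c1: "card (G0 \<inter> mp_compl n P') \<le> 1" by simp
  have "G0 \<in> {G0 \<in> Gsub n P (m - 1). \<exists>P'\<in>colorings n r. P' \<noteq> P \<and> card (G0 \<inter> mp_compl n P') \<le> 1}"
    using G0(1) P'(1,3) c1 by auto
  thus "G \<in> insert e ` {G0 \<in> Gsub n P (m - 1). \<exists>P'\<in>colorings n r. P' \<noteq> P \<and> card (G0 \<inter> mp_compl n P') \<le> 1}"
    by (rule image_eqI[where f="insert e", OF G0(2)])
qed

lemma D1_card_bound:
  assumes "partition_on (vset n) P" "(A,B) \<in> I1 n P \<epsilon>" "\<epsilon> \<ge> 0"
  shows "real (card (D1 A B)) \<ge> (\<epsilon> * real n) ^ 2"
proof -
  have c: "\<epsilon> * real n \<le> real (card A)" "\<epsilon> * real n \<le> real (card B)" using assms(2) unfolding I1_def by auto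
  have "card (D1 A B) = card A * card B" by (rule card_D1[OF D1_sub(2)[OF assms(1,2)]])
  hence "real (card (D1 A B)) = real (card A) * real (card B)" by simp
  moreover have "(\<epsilon> * real n) ^ 2 \<le> real (card A) * real (card B)"
    unfolding power2_eq_square by (rule mult_mono) (use c assms(3) in auto)
  ultimately show ?thesis by simp
qed

lemma D2_card_bound:
  assumes r2: "r \<ge> 2" and P: "P \<in> balanced_colorings n r (1 / (2 * real r))" and I: "(M,\<tau>) \<in> I2 n P r"
  shows "real (card (D2 M \<tau>)) \<ge> real (card M) * (real n / (4 * real r))"
proof -
  have pP: "partition_on (vset n) P"
    and sz: "\<And>V. V \<in> P \<Longrightarrow> (1 / real r - 1 / (2 * real r)) * real n \<le> real (card V)"
    using P unfolding balanced_colorings_def by auto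
  have I': "M \<subseteq> vset n" "\<tau> \<in> M \<rightarrow>\<^sub>E P" "\<And>V. V \<in> P \<Longrightarrow> real (card (V \<inter> M)) \<le> real n / (8 * real r)"
    using I unfolding I2_def by auto
  have rpos: "real r > 0" using r2 by simp
  have fM: "finite M" by (rule finite_subset[OF I'(1) finite_vset])
  have fT: "finite (\<tau> v)" if "v \<in> M" for v
  proof -
    have "\<tau> v \<in> P" using I'(2) that by auto
    thus ?thesis by (rule finite_subset[OF part_sub[OF pP] finite_vset])
  qed
  have each: "real (card (\<tau> v - M)) \<ge> real n / (4 * real r)" if v: "v \<in> M" for v
  proof -
    have TP: "\<tau> v \<in> P" using I'(2) v by auto
    have "card (\<tau> v - M) = card (\<tau> v) - card (\<tau> v \<inter> M)" by (rule card_Diff_subset_Int) (use fT[OF v] in auto)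
    moreover have "card (\<tau> v \<inter> M) \<le> card (\<tau> v)" by (rule card_mono) (use fT[OF v] in auto)
    ultimately have "real (card (\<tau> v - M)) = real (card (\<tau> v)) - real (card (\<tau> v \<inter> M))" by simp
    moreover have "(1 / real r - 1 / (2 * real r)) * real n = real n / (2 * real r)"
      using rpos by (simp add: field_simps)
    moreover have "real n / (2 * real r) - real n / (8 * real r) \<ge> real n / (4 * real r)"
      using rpos by (simp add: field_simps)
    ultimately show ?thesis using sz[OF TP] I'(3)[OF TP] by linarith
  qed
  have "card (D2 M \<tau>) = (\<Sum>v\<in>M. card (\<tau> v - M))" by (rule card_D2[OF fM fT])
  hence "real (card (D2 M \<tau>)) = (\<Sum>v\<in>M. real (card (\<tau> v - M)))" by simp
  also have "\<dots> \<ge> (\<Sum>v\<in>M. real n / (4 * real r))" by (rule sum_mono) (rule each)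
  finally show ?thesis by simp
qed

lemma main_bound:
  fixes r n m :: nat and a c :: real and P :: "nat set set" and e :: "nat set"
  assumes r2: "r \<ge> 2" and a: "a > 0"
    and P: "P \<in> balanced_colorings n r (1 / (2 * real r))"
    and e: "e \<in> mp_compl n P"
    and nB: "real n \<ge> a + 40 * real r + 16"
    and c1: "c \<ge> 4 * real r * (a + 4)" and c2: "c \<ge> 128 * real r ^ 4"
    and mc: "real m \<ge> c * real n * ln (real n)"
    and kN: "m - 1 \<le> card (mp_edges n P)"
  shows "real (card (Gme n P e m - Ume n r P e m)) \<le> real n powr (- a) * real (card (Gme n P e m))"
proof -
  define E where "E = mp_edges n P"
  define N where "N = card E"
  define k where "k = m - 1"
  define \<epsilon> :: real where "\<epsilon> = 1 / (8 * real r ^ 2)"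
  define lam where "lam = real k / real N"
  define S where "S X = {G. G \<subseteq> E \<and> card G = k \<and> G \<inter> X = {}}" for X
  define DD1 where "DD1 p = D1 (fst p) (snd p)" for p :: "nat set \<times> nat set"
  define DD2 where "DD2 q = D2 (fst q) (snd q)" for q :: "nat set \<times> (nat \<Rightarrow> nat set)"
  define U1 where "U1 = (\<Union>i\<in>I1 n P \<epsilon>. \<Union>x\<in>DD1 i. S (DD1 i - {x}))"
  define U2 where "U2 = (\<Union>i\<in>I2 n P r. \<Union>x\<in>DD2 i. S (DD2 i - {x}))"
  define BadG0 where "BadG0 = {G0 \<in> Gsub n P (m - 1). \<exists>P'\<in>colorings n r. P' \<noteq> P \<and> card (G0 \<inter> mp_compl n P') \<le> 1}"
  have pP: "partition_on (vset n) P" and cP: "card P = r" using P unfolding balanced_colorings_def by auto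
  have rpos: "real r > 0" "real r \<ge> 1" using r2 by auto
  have n16: "real n \<ge> 16" using nB a rpos by linarith
  have npos: "real n > 0" using n16 by simp
  have n1: "n \<ge> 1" using n16 by simp
  have ln2: "ln (real n) \<ge> 1/2"
  proof -
    have "ln 2 \<le> ln (real n)" using n16 by (subst ln_le_cancel_iff) auto
    thus ?thesis using ln2_ge by simp
  qed
  have cpos: "c \<ge> 128" 
  proof -
    have "real r ^ 4 \<ge> 1" using rpos by simp
    thus ?thesis using c2 by simp
  qed
  have finE: "finite E" unfolding E_def by simp
  have NE: "real N \<le> real n ^ 2" unfolding N_def E_def using card_edges[of n P] by (metis of_nat_le_iff of_nat_power)
  have cnl: "c * real n * ln (real n) \<ge> 2"
  proof -
    have h: "128 * 16 \<le> c * real n" using cpos n16 by (intro mult_mono) auto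
    have "(128 * 16) * (1/2) \<le> c * real n * ln (real n)" by (rule mult_mono[OF h ln2]) (use h in auto)
    thus ?thesis by simp
  qed
  have m1: "m \<ge> 1" using mc cnl by simp
  have rk: "real k = real m - 1" using m1 unfolding k_def by (simp add: of_nat_diff)
  have kc: "real k \<ge> c * real n * ln (real n) - 1" using rk mc by simp
  have k1: "k \<ge> 1" using kc cnl by simp
  have kN': "k \<le> N" using kN unfolding k_def N_def E_def .
  have Npos: "real N > 0" using k1 kN' by simp
  have lampos: "lam > 0" and lam1: "lam \<le> 1" using k1 kN' Npos unfolding lam_def by (auto simp: divide_le_eq_1)
  have lamN: "lam * real N = real k" unfolding lam_def using Npos by simp
  have cG: "card (Gme n P e m) = N choose k" unfolding N_def E_def k_def by (rule gme_card[OF e])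
  have finGsub: "finite (Gsub n P (m - 1))"
    by (rule finite_subset[of _ "Pow E"]) (auto simp: Gsub_def E_def finE)
  have finBad: "finite BadG0" using finGsub unfolding BadG0_def by simp
  have c_bad: "card (Gme n P e m - Ume n r P e m) \<le> card BadG0"
  proof -
    have "card (Gme n P e m - Ume n r P e m) \<le> card (insert e ` BadG0)"
      by (rule card_mono) (use finBad bad_sub[of n P e m r] in \<open>auto simp: BadG0_def\<close>)
    also have "\<dots> \<le> card BadG0" by (rule card_image_le[OF finBad])
    finally show ?thesis .
  qed
  have BadU: "BadG0 \<subseteq> U1 \<union> U2"
  proof
    fix G0 assume G0: "G0 \<in> BadG0"
    then obtain P' where P': "P' \<in> colorings n r" "P' \<noteq> P" "card (G0 \<inter> mp_compl n P') \<le> 1"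
      unfolding BadG0_def by blast
    have G0E: "G0 \<subseteq> E" "card G0 = k" using G0 unfolding BadG0_def Gsub_def E_def k_def by auto
    have finG0: "finite G0" by (rule finite_subset[OF G0E(1) finE])
    have notboth: "\<not> ((\<forall>(A,B)\<in>I1 n P \<epsilon>. 2 \<le> card (G0 \<inter> D1 A B)) \<and> (\<forall>(M,\<tau>)\<in>I2 n P r. 2 \<le> card (G0 \<inter> D2 M \<tau>)))"
    proof
      assume "(\<forall>(A,B)\<in>I1 n P \<epsilon>. 2 \<le> card (G0 \<inter> D1 A B)) \<and> (\<forall>(M,\<tau>)\<in>I2 n P r. 2 \<le> card (G0 \<inter> D2 M \<tau>))"
      hence "P' = P" using struct_lemma[OF r2 n1 P P'(1) finG0 P'(3)] unfolding \<epsilon>_def by blast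
      thus False using P'(2) by simp
    qed
    show "G0 \<in> U1 \<union> U2"
    proof (cases "\<forall>(A,B)\<in>I1 n P \<epsilon>. 2 \<le> card (G0 \<inter> D1 A B)")
      case False
      then obtain A B where AB: "(A,B) \<in> I1 n P \<epsilon>" "card (G0 \<inter> D1 A B) < 2" by auto
      have "real (card (D1 A B)) \<ge> (\<epsilon> * real n) ^ 2" by (rule D1_card_bound[OF pP AB(1)]) (simp add: \<epsilon>_def)
      moreover have "(\<epsilon> * real n) ^ 2 > 0" using npos rpos by (simp add: \<epsilon>_def)
      ultimately have "card (D1 A B) \<noteq> 0" by linarith
      hence ne: "D1 A B \<noteq> {}" by auto
      obtain x where x: "x \<in> D1 A B" "G0 \<inter> (D1 A B - {x}) = {}" using avoid_pick[OF finG0 ne AB(2)] by blast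
      have "G0 \<in> S (DD1 (A,B) - {x})" unfolding S_def DD1_def using G0E x by simp
      note mem = this
      have "G0 \<in> U1" unfolding U1_def
        by (rule UN_I[OF AB(1)], rule UN_I[of x], simp add: DD1_def x(1), rule mem)
      thus ?thesis by simp
    next
      case True
      hence "\<not> (\<forall>(M,\<tau>)\<in>I2 n P r. 2 \<le> card (G0 \<inter> D2 M \<tau>))" using notboth by blast
      then obtain M \<tau> where Mt: "(M,\<tau>) \<in> I2 n P r" "card (G0 \<inter> D2 M \<tau>) < 2" by auto
      have "real (card (D2 M \<tau>)) \<ge> real (card M) * (real n / (4 * real r))" by (rule D2_card_bound[OF r2 P Mt(1)])
      moreover have "M \<noteq> {}" "M \<subseteq> vset n" using Mt(1) unfolding I2_def by auto
      moreover have "finite M" using calculation(3) by (rule finite_subset) simp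
      ultimately have "real (card (D2 M \<tau>)) > 0" using npos rpos
        by (smt (verit) card_gt_0_iff divide_pos_pos mult_pos_pos of_nat_0_less_iff)
      hence ne: "D2 M \<tau> \<noteq> {}" by auto
      obtain x where x: "x \<in> D2 M \<tau>" "G0 \<inter> (D2 M \<tau> - {x}) = {}" using avoid_pick[OF finG0 ne Mt(2)] by blast
      have "G0 \<in> S (DD2 (M,\<tau>) - {x})" unfolding S_def DD2_def using G0E x by simp
      note mem = this
      have "G0 \<in> U2" unfolding U2_def
        by (rule UN_I[OF Mt(1)], rule UN_I[of x], simp add: DD2_def x(1), rule mem)
      thus ?thesis by simp
    qed
  qed
  have finI1: "finite (I1 n P \<epsilon>)"
    by (rule finite_subset[of _ "Pow (vset n) \<times> Pow (vset n)"]) (auto simp: I1_def)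
  have cardI1: "real (card (I1 n P \<epsilon>)) \<le> 4 ^ n"
  proof -
    have "card (I1 n P \<epsilon>) \<le> card (Pow (vset n) \<times> Pow (vset n))"
      by (rule card_mono) (auto simp: I1_def)
    also have "\<dots> = 4 ^ n" by (simp add: card_cartesian_product card_Pow power_mult_distrib[symmetric])
    finally show ?thesis by (metis of_nat_le_iff of_nat_numeral of_nat_power)
  qed
  define PP where "PP = Pow (vset n) - {{}}"
  define SIG where "SIG = Sigma PP (\<lambda>M. M \<rightarrow>\<^sub>E P)"
  have finP: "finite P" using finite_elements[OF finite_vset pP] .
  have finPP: "finite PP" unfolding PP_def by simp
  have finPi: "finite (M \<rightarrow>\<^sub>E P)" if "M \<in> PP" for M
  proof -
    have "finite M" using that unfolding PP_def by (auto intro: finite_subset[OF _ finite_vset])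
    thus ?thesis using finP by (simp add: finite_PiE)
  qed
  have finSIG: "finite SIG" unfolding SIG_def using finPP finPi by (rule finite_SigmaI)
  have I2SIG: "I2 n P r \<subseteq> SIG" unfolding I2_def SIG_def PP_def by auto
  have finI2: "finite (I2 n P r)" by (rule finite_subset[OF I2SIG finSIG])
  have D1E: "DD1 i \<subseteq> E" "DD1 i \<noteq> {}" "real (card (DD1 i)) \<ge> (\<epsilon> * real n) ^ 2" if i: "i \<in> I1 n P \<epsilon>" for i
  proof -
    obtain A B where AB: "i = (A,B)" by (cases i)
    show "DD1 i \<subseteq> E" unfolding DD1_def E_def AB using D1_sub(1)[OF pP] i AB by simp
    show lb: "real (card (DD1 i)) \<ge> (\<epsilon> * real n) ^ 2" unfolding DD1_def AB
      by (rule D1_card_bound[OF pP]) (use i AB in \<open>auto simp: \<epsilon>_def\<close>)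
    have "(\<epsilon> * real n) ^ 2 > 0" using npos rpos by (simp add: \<epsilon>_def)
    hence "card (DD1 i) \<noteq> 0" using lb by linarith
    thus "DD1 i \<noteq> {}" by auto
  qed
  have D2E: "DD2 i \<subseteq> E" "DD2 i \<noteq> {}" "real (card (DD2 i)) \<ge> real (card (fst i)) * (real n / (4 * real r))"
    if i: "i \<in> I2 n P r" for i
  proof -
    obtain M \<tau> where Mt: "i = (M,\<tau>)" by (cases i)
    show "DD2 i \<subseteq> E" unfolding DD2_def E_def Mt using D2_sub[OF pP] i Mt by simp
    show lb: "real (card (DD2 i)) \<ge> real (card (fst i)) * (real n / (4 * real r))" unfolding DD2_def Mt
      using D2_card_bound[OF r2 P] i Mt by simp
    have "M \<noteq> {}" "M \<subseteq> vset n" using i Mt unfolding I2_def by auto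
    moreover have "finite M" using calculation(2) by (rule finite_subset) simp
    ultimately have "card M > 0" by auto
    hence "real (card M) * (real n / (4 * real r)) > 0" using npos rpos by simp
    hence "card (DD2 i) \<noteq> 0" using lb Mt by auto
    thus "DD2 i \<noteq> {}" by auto
  qed
  have dN1: "card (DD1 i) \<le> N" if "i \<in> I1 n P \<epsilon>" for i unfolding N_def by (rule card_mono[OF finE D1E(1)[OF that]])
  have dN2: "card (DD2 i) \<le> N" if "i \<in> I2 n P r" for i unfolding N_def by (rule card_mono[OF finE D2E(1)[OF that]])
  have dn1: "card (DD1 i) \<le> n ^ 2" if "i \<in> I1 n P \<epsilon>" for i using dN1[OF that] card_edges[of n P] unfolding N_def E_def by linarith
  have dn2: "card (DD2 i) \<le> n ^ 2" if "i \<in> I2 n P r" for i using dN2[OF that] card_edges[of n P] unfolding N_def E_def by linarith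
  have d1pos: "card (DD1 i) \<ge> 1" if "i \<in> I1 n P \<epsilon>" for i
    using D1E(2)[OF that] finite_subset[OF D1E(1)[OF that] finE] by (simp add: Suc_le_eq card_gt_0_iff)
  have d2pos: "card (DD2 i) \<ge> 1" if "i \<in> I2 n P r" for i
    using D2E(2)[OF that] finite_subset[OF D2E(1)[OF that] finE] by (simp add: Suc_le_eq card_gt_0_iff)
  define F where "F d = real d * exp (- (real k * (real d - 1) / real N))" for d :: nat
  have U1b: "real (card U1) \<le> (\<Sum>i\<in>I1 n P \<epsilon>. F (card (DD1 i))) * real (N choose k)"
    unfolding U1_def S_def F_def N_def
    by (rule union_bound[OF finI1 finE]) (use D1E kN' N_def in auto)
  have U2b: "real (card U2) \<le> (\<Sum>i\<in>I2 n P r. F (card (DD2 i))) * real (N choose k)"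
    unfolding U2_def S_def F_def N_def
    by (rule union_bound[OF finI2 finE]) (use D2E kN' N_def in auto)
  have Fb: "F d \<le> real n ^ 2 * exp 1 * exp (- (lam * real d))" if "1 \<le> d" "d \<le> n ^ 2" for d
  proof -
    have "real k * (real d - 1) / real N = lam * (real d - 1)" unfolding lam_def by simp
    hence "F d = real d * exp (- (lam * (real d - 1)))" unfolding F_def by simp
    also have "\<dots> \<le> real n ^ 2 * exp 1 * exp (- (lam * real d))" by (rule term_bound) (use that lampos lam1 in auto)
    finally show ?thesis .
  qed
  have lamn2: "lam * real n ^ 2 \<ge> real k"
  proof -
    have "lam * real N \<le> lam * real n ^ 2" using NE lampos by (intro mult_left_mono) auto
    thus ?thesis using lamN by simp
  qed
  have nln: "real n * ln (real n) \<ge> 0" using npos ln2 by simp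
  have eps2: "\<epsilon> ^ 2 * c \<ge> 2"
  proof -
    have "\<epsilon> ^ 2 = 1 / (64 * real r ^ 4)" unfolding \<epsilon>_def by (simp add: power_divide power_mult_distrib)
    moreover have "1 / (64 * real r ^ 4) * c \<ge> 1 / (64 * real r ^ 4) * (128 * real r ^ 4)"
      using c2 rpos by (intro mult_left_mono) auto
    moreover have "1 / (64 * real r ^ 4) * (128 * real r ^ 4) = 2" using rpos by simp
    ultimately show ?thesis by simp
  qed
  have eps2le: "\<epsilon> ^ 2 \<le> 1"
  proof -
    have "real r ^ 2 \<ge> 1" using rpos(2) by (rule one_le_power)
    hence "8 * real r ^ 2 \<ge> 1" by simp
    hence "\<epsilon> \<le> 1" "\<epsilon> \<ge> 0" unfolding \<epsilon>_def by (auto simp: divide_le_eq_1)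
    thus ?thesis by (simp add: power_le_one)
  qed
  have T1i: "F (card (DD1 i)) \<le> real n ^ 2 * exp 1 * exp 1 * exp (- (2 * real n * ln (real n)))"
    if i: "i \<in> I1 n P \<epsilon>" for i
  proof -
    define d where "d = card (DD1 i)"
    have "real d \<ge> \<epsilon> ^ 2 * real n ^ 2" using D1E(3)[OF i] unfolding d_def by (simp add: power_mult_distrib)
    hence "lam * real d \<ge> lam * (\<epsilon> ^ 2 * real n ^ 2)" using lampos by (intro mult_left_mono) auto
    moreover have "lam * (\<epsilon> ^ 2 * real n ^ 2) = \<epsilon> ^ 2 * (lam * real n ^ 2)" by simp
    moreover have "\<epsilon> ^ 2 * (lam * real n ^ 2) \<ge> \<epsilon> ^ 2 * real k" using lamn2 by (intro mult_left_mono) auto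
    moreover have "\<epsilon> ^ 2 * real k \<ge> \<epsilon> ^ 2 * (c * real n * ln (real n) - 1)" using kc by (intro mult_left_mono) auto
    moreover have "\<epsilon> ^ 2 * (c * real n * ln (real n) - 1) = (\<epsilon> ^ 2 * c) * (real n * ln (real n)) - \<epsilon> ^ 2"
      by (simp add: algebra_simps)
    moreover have "(\<epsilon> ^ 2 * c) * (real n * ln (real n)) \<ge> 2 * (real n * ln (real n))"
      using eps2 nln by (intro mult_right_mono) auto
    ultimately have L: "lam * real d \<ge> 2 * real n * ln (real n) - 1" using eps2le by linarith
    have Fd: "F d \<le> real n ^ 2 * exp 1 * exp (- (lam * real d))" by (rule Fb) (use d1pos[OF i] dn1[OF i] d_def in auto)
    have "exp (- (lam * real d)) \<le> exp (1 + - (2 * real n * ln (real n)))" using L by simp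
    also have "\<dots> = exp 1 * exp (- (2 * real n * ln (real n)))" by (rule exp_add)
    finally have E1: "exp (- (lam * real d)) \<le> exp 1 * exp (- (2 * real n * ln (real n)))" .
    have "real n ^ 2 * exp 1 * exp (- (lam * real d)) \<le> real n ^ 2 * exp 1 * (exp 1 * exp (- (2 * real n * ln (real n))))"
      by (rule mult_left_mono[OF E1]) simp
    with Fd show ?thesis unfolding d_def by (simp add: mult.assoc)
  qed
  have S1: "(\<Sum>i\<in>I1 n P \<epsilon>. F (card (DD1 i))) \<le> real n powr (- a) / 2"
  proof -
    define X where "X = real n ^ 2 * exp 1 * exp 1 * exp (- (2 * real n * ln (real n)))"
    have X0: "X \<ge> 0" unfolding X_def by simp
    have "(\<Sum>i\<in>I1 n P \<epsilon>. F (card (DD1 i))) \<le> (\<Sum>i\<in>I1 n P \<epsilon>. X)"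
      by (rule sum_mono) (use T1i in \<open>simp add: X_def\<close>)
    also have "\<dots> = real (card (I1 n P \<epsilon>)) * X" by simp
    also have "\<dots> \<le> 4 ^ n * X" by (rule mult_right_mono[OF cardI1 X0])
    also have "\<dots> \<le> real n powr (- a) / 2" unfolding X_def using T1_bound[OF a] nB rpos
      by (simp add: mult.assoc)
    finally show ?thesis .
  qed
  define t where "t = lam * real n / (4 * real r)"
  define y where "y = exp (- t)"
  have ln0: "ln (real n) \<ge> 0" using ln2 by simp
  have t_lb: "t \<ge> (a + 4) * ln (real n) - 1"
  proof -
    have "lam * real n * real n \<ge> real k" using lamn2 by (simp add: power2_eq_square mult.assoc)
    hence h1: "lam * real n \<ge> real k / real n" using npos by (simp add: field_simps)
    have "real k / real n \<ge> (c * real n * ln (real n) - 1) / real n" using kc npos by (intro divide_right_mono) auto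
    moreover have "(c * real n * ln (real n) - 1) / real n = c * ln (real n) - 1 / real n" using npos by (simp add: field_simps)
    ultimately have h2: "lam * real n \<ge> c * ln (real n) - 1 / real n" using h1 by linarith
    have "t \<ge> (c * ln (real n) - 1 / real n) / (4 * real r)" unfolding t_def using h2 rpos by (intro divide_right_mono) auto
    moreover have "(c * ln (real n) - 1 / real n) / (4 * real r) = (c / (4 * real r)) * ln (real n) - 1 / (4 * real r * real n)"
      using rpos npos by (simp add: field_simps)
    moreover have "(c / (4 * real r)) * ln (real n) \<ge> (a + 4) * ln (real n)"
    proof (rule mult_right_mono[OF _ ln0])
      show "a + 4 \<le> c / (4 * real r)" using c1 rpos by (simp add: field_simps)
    qed
    moreover have "1 / (4 * real r * real n) \<le> 1"
    proof -
      have h: "1 * 1 \<le> real r * real n" by (rule mult_mono) (use rpos n16 in auto)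
      hence h2: "1 \<le> 4 * real r * real n" by simp
      have gen: "\<And>x::real. 1 \<le> x \<Longrightarrow> 1 / x \<le> 1" by simp
      show ?thesis by (rule gen[OF h2])
    qed
    ultimately show ?thesis by linarith
  qed
  have y0: "y \<ge> 0" unfolding y_def by simp
  have y_ub: "y \<le> exp 1 * real n powr (- (a + 4))"
  proof -
    have eqm: "(- (a + 4)) * ln (real n) = - ((a + 4) * ln (real n))" by (rule mult_minus_left)
    have ineq: "- t \<le> 1 + (- (a + 4)) * ln (real n)" unfolding eqm using t_lb by linarith
    have "y \<le> exp (1 + (- (a + 4)) * ln (real n))" unfolding y_def using ineq by simp
    also have "\<dots> = exp 1 * exp ((- (a + 4)) * ln (real n))" by (rule exp_add)
    also have "exp ((- (a + 4)) * ln (real n)) = real n powr (- (a + 4))" unfolding powr_def using npos by simp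
    finally show ?thesis .
  qed
  have T2i: "F (card (DD2 q)) \<le> real n ^ 2 * exp 1 * y ^ card (fst q)" if q: "q \<in> I2 n P r" for q
  proof -
    define d where "d = card (DD2 q)"
    have "real d \<ge> real (card (fst q)) * (real n / (4 * real r))" using D2E(3)[OF q] unfolding d_def .
    hence "lam * real d \<ge> lam * (real (card (fst q)) * (real n / (4 * real r)))" using lampos by (intro mult_left_mono) auto
    moreover have "lam * (real (card (fst q)) * (real n / (4 * real r))) = real (card (fst q)) * t" unfolding t_def by simp
    ultimately have "exp (- (lam * real d)) \<le> exp (- (real (card (fst q)) * t))" by simp
    also have "- (real (card (fst q)) * t) = real (card (fst q)) * (- t)" by simp
    also have "exp (real (card (fst q)) * (- t)) = y ^ card (fst q)" unfolding y_def by (rule exp_of_nat_mult)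
    finally have E2: "exp (- (lam * real d)) \<le> y ^ card (fst q)" .
    have Fd: "F d \<le> real n ^ 2 * exp 1 * exp (- (lam * real d))" by (rule Fb) (use d2pos[OF q] dn2[OF q] d_def in auto)
    have "real n ^ 2 * exp 1 * exp (- (lam * real d)) \<le> real n ^ 2 * exp 1 * y ^ card (fst q)"
      by (rule mult_left_mono[OF E2]) simp
    with Fd show ?thesis unfolding d_def by simp
  qed
  have S2: "(\<Sum>i\<in>I2 n P r. F (card (DD2 i))) \<le> real n powr (- a) / 2"
  proof -
    define K where "K = real n ^ 2 * exp 1"
    have K0: "K \<ge> 0" unfolding K_def by simp
    have "(\<Sum>i\<in>I2 n P r. F (card (DD2 i))) \<le> (\<Sum>i\<in>I2 n P r. K * y ^ card (fst i))"
      by (rule sum_mono) (use T2i in \<open>simp add: K_def\<close>)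
    also have "\<dots> \<le> (\<Sum>i\<in>SIG. K * y ^ card (fst i))"
      by (rule sum_mono2[OF finSIG I2SIG]) (use K0 y0 in auto)
    also have "\<dots> = (\<Sum>M\<in>PP. \<Sum>\<tau>\<in>M \<rightarrow>\<^sub>E P. K * y ^ card M)"
      unfolding SIG_def by (subst sum.Sigma[OF finPP]) (use finPi in \<open>auto simp: case_prod_beta\<close>)
    also have "\<dots> = (\<Sum>M\<in>PP. K * (real r * y) ^ card M)"
    proof (rule sum.cong[OF refl])
      fix M assume M: "M \<in> PP"
      have "finite M" using M unfolding PP_def by (auto intro: finite_subset[OF _ finite_vset])
      hence "card (M \<rightarrow>\<^sub>E P) = r ^ card M" using cP by (simp add: card_PiE)
      thus "(\<Sum>\<tau>\<in>M \<rightarrow>\<^sub>E P. K * y ^ card M) = K * (real r * y) ^ card M"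
        by (simp add: power_mult_distrib)
    qed
    also have "\<dots> = K * (\<Sum>M\<in>PP. (real r * y) ^ card M)" by (simp add: sum_distrib_left)
    also have "(\<Sum>M\<in>PP. (real r * y) ^ card M) = (1 + real r * y) ^ n - 1"
    proof -
      have "(\<Sum>M\<in>Pow (vset n). (real r * y) ^ card M) = (real r * y) ^ card ({}::nat set) + (\<Sum>M\<in>PP. (real r * y) ^ card M)"
        unfolding PP_def by (rule sum.remove) auto
      moreover have "(\<Sum>M\<in>Pow (vset n). (real r * y) ^ card M) = (1 + real r * y) ^ n"
        using sum_pow_card[of "vset n" "real r * y"] by simp
      ultimately show ?thesis by simp
    qed
    also have "K * ((1 + real r * y) ^ n - 1) \<le> real n powr (- a) / 2" unfolding K_def
    proof (rule T2_bound[OF a])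
      show "1 \<le> r" using r2 by simp
      show "a + 40 * real r + 16 \<le> real n" using nB .
      show "0 \<le> real r * y" using y0 by simp
      have "real r * y \<le> real r * (exp 1 * real n powr (- (a + 4)))" using y_ub by (intro mult_left_mono) auto
      thus "real r * y \<le> exp 1 * real r * real n powr (- (a + 4))" by (simp add: mult_ac)
    qed
    finally show ?thesis .
  qed
  have UPow: "U1 \<union> U2 \<subseteq> Pow E" unfolding U1_def U2_def S_def by auto
  have finU: "finite (U1 \<union> U2)" by (rule finite_subset[OF UPow]) (simp add: finE)
  have "card (Gme n P e m - Ume n r P e m) \<le> card (U1 \<union> U2)"
    using c_bad card_mono[OF finU BadU] by linarith
  also have "\<dots> \<le> card U1 + card U2" by (rule card_Un_le)
  finally have "real (card (Gme n P e m - Ume n r P e m)) \<le> real (card U1) + real (card U2)" by linarith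
  also have "\<dots> \<le> (\<Sum>i\<in>I1 n P \<epsilon>. F (card (DD1 i))) * real (N choose k) + (\<Sum>i\<in>I2 n P r. F (card (DD2 i))) * real (N choose k)"
    using U1b U2b by linarith
  also have "\<dots> \<le> (real n powr (- a) / 2) * real (N choose k) + (real n powr (- a) / 2) * real (N choose k)"
    by (intro add_mono mult_right_mono S1 S2) auto
  also have "\<dots> = real n powr (- a) * real (card (Gme n P e m))" using cG by simp
  finally show ?thesis .
qed

theorem lemma5p4:
  fixes r :: nat
  assumes "r \<ge> 2"
  shows "\<forall>a::real. a > 0 \<longrightarrow> (\<exists>c::real. c > 0 \<and>
           (\<forall>(n::nat) P e (m::nat).
              P \<in> balanced_colorings n r (1 / (2 * real r)) \<longrightarrow>
              e \<in> mp_compl n P \<longrightarrow>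
              real m \<ge> c * real n * ln (real n) \<longrightarrow>
              real (card (Gme n P e m - Ume n r P e m))
                \<le> real n powr (- a) * real (card (Gme n P e m))))"
proof (intro allI impI)
  fix a :: real assume a: "a > 0"
  define B where "B = a + 40 * real r + 16"
  define c where "c = 4 * real r * (a + 4) + 128 * real r ^ 4 + 2 * (B + 1)"
  have rpos: "real r \<ge> 2" using assms by simp
  have Bpos: "B \<ge> 0" unfolding B_def using a rpos by simp
  have t1: "4 * real r * (a + 4) \<ge> 0" using a rpos by simp
  have t2: "128 * real r ^ 4 \<ge> 0" by simp
  define X where "X = 4 * real r * (a + 4)"
  define Y where "Y = 128 * real r ^ 4"
  have cXY: "c = X + Y + 2 * (B + 1)" unfolding c_def X_def Y_def by simp
  have X0: "X \<ge> 0" and Y0: "Y \<ge> 0" using t1 t2 unfolding X_def Y_def by auto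
  have B1: "2 * (B + 1) \<ge> 0" using Bpos by simp
  have gen: "\<And>p q s::real. p \<ge> 0 \<Longrightarrow> q \<ge> 0 \<Longrightarrow> s \<ge> 0 \<Longrightarrow> p \<le> p + q + s \<and> q \<le> p + q + s \<and> s \<le> p + q + s"
    by simp
  have c1: "c \<ge> 4 * real r * (a + 4)" unfolding X_def[symmetric] cXY using gen[OF X0 Y0 B1] by blast
  have c2: "c \<ge> 128 * real r ^ 4" unfolding Y_def[symmetric] cXY using gen[OF X0 Y0 B1] by blast
  have c3: "c \<ge> 2 * (B + 1)" unfolding cXY using gen[OF X0 Y0 B1] by blast
  show "\<exists>c::real. c > 0 \<and>
           (\<forall>(n::nat) P e (m::nat).
              P \<in> balanced_colorings n r (1 / (2 * real r)) \<longrightarrow>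
              e \<in> mp_compl n P \<longrightarrow>
              real m \<ge> c * real n * ln (real n) \<longrightarrow>
              real (card (Gme n P e m - Ume n r P e m))
                \<le> real n powr (- a) * real (card (Gme n P e m)))"
  proof (intro exI[of _ c] conjI allI impI)
    have "2 * (B + 1) > 0" using Bpos by simp
    thus "c > 0" using c3 by (rule less_le_trans)
    fix n :: nat and P e and m :: nat
    assume P: "P \<in> balanced_colorings n r (1 / (2 * real r))" and e: "e \<in> mp_compl n P"
      and mc: "real m \<ge> c * real n * ln (real n)"
    show "real (card (Gme n P e m - Ume n r P e m)) \<le> real n powr (- a) * real (card (Gme n P e m))"
    proof (cases "m - 1 \<le> card (mp_edges n P)")
      case False
      have "Gsub n P (m - 1) = {}"
      proof (rule ccontr)
        assume "Gsub n P (m - 1) \<noteq> {}"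
        then obtain G where G: "G \<subseteq> mp_edges n P" "card G = m - 1" unfolding Gsub_def by blast
        have "card G \<le> card (mp_edges n P)" by (rule card_mono[OF finite_edges G(1)])
        thus False using G(2) False by simp
      qed
      hence "Gme n P e m = {}" unfolding Gme_def by simp
      thus ?thesis by simp
    next
      case True
      obtain u v where uv: "e = {u,v}" "u \<in> vset n" "v \<in> vset n" "u \<noteq> v"
        using e unfolding mp_compl_def by blast
      have "card {u,v} \<le> card (vset n)" by (rule card_mono) (use uv in auto)
      hence n2: "n \<ge> 2" using uv by simp
      have nB: "real n \<ge> B"
      proof (rule ccontr)
        assume "\<not> real n \<ge> B"
        hence nlt: "real n < B" by simp
        have npos: "real n \<ge> 2" using n2 by simp
        have ln2: "ln (real n) \<ge> 1/2"
        proof -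
          have "ln 2 \<le> ln (real n)" using npos by (subst ln_le_cancel_iff) auto
          thus ?thesis using ln2_ge by simp
        qed
        have nl0: "real n * ln (real n) \<ge> 0" using npos ln2 by simp
        have A1: "c * (real n * ln (real n)) \<ge> 2 * (B + 1) * (real n * ln (real n))"
          by (rule mult_right_mono[OF c3 nl0])
        have "real n * ln (real n) \<ge> real n * (1/2)" using npos ln2 by (intro mult_left_mono) auto
        hence A2: "2 * (B + 1) * (real n * ln (real n)) \<ge> 2 * (B + 1) * (real n * (1/2))"
          by (rule mult_left_mono) (use Bpos in auto)
        have A3: "(B + 1) * real n > (real n + 1) * real n" using nlt npos by (intro mult_strict_right_mono) auto
        have A4: "c * (real n * ln (real n)) \<le> real m" using mc by (simp add: mult.assoc)
        have "(real n + 1) * real n < (B + 1) * real n" by (rule A3)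
        also have "\<dots> = 2 * (B + 1) * (real n * (1/2))" by simp
        also have "\<dots> \<le> 2 * (B + 1) * (real n * ln (real n))" by (rule A2)
        also have "\<dots> \<le> c * (real n * ln (real n))" by (rule A1)
        also have "\<dots> \<le> real m" by (rule A4)
        finally have "real m > (real n + 1) * real n" .
        hence "real m > real n ^ 2 + 2" using npos by (simp add: power2_eq_square algebra_simps)
        hence "real (n ^ 2 + 2) < real m" by simp
        hence "n ^ 2 + 2 < m" by (simp only: of_nat_less_iff)
        hence "m - 1 > n ^ 2" by simp
        thus False using True card_edges[of n P] by linarith
      qed
      show ?thesis
        by (rule main_bound[OF assms a P e _ c1 c2 mc True]) (use nB B_def in simp)
    qed
  qed
qed

end
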